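(* Let $\mathfrak g$ be an almost abelian Lie algebra with a Hermitian structure $(J,g)$ and let $e$ be an admissible frame with data $\lambda,v,A$. Then the Chern connection of $g$ is flat if and only if $\lambda=0$, $v=0$ and $[A,A^\ast]=0$.
   Context: Setup: Hermitian structure $(J,g)$ on a real Lie algebra $\mathfrak g$ of dimension $2n$ ($J$ integrable, $g$ a $J$-invariant inner product), viewed as a left-invariant Hermitian structure on the corresponding simply connected Lie group. $\mathfrak g^{1,0}=\{x-\sqrt{-1}Jx\}$; a unitary frame is a basis $e_1,\dots,e_n$ of $\mathfrak g^{1,0}$ with $g(e_i,\bar e_j)=\delta_{ij}$, dual coframe $\varphi_i$, $d$ the Chevalley–Eilenberg differential. $\mathfrak g$ is almost abelian if non-abelian with an abelian ideal of codimension one; an admissible frame is a unitary frame with $d\varphi_1=-\lambda\,\varphi_1\wedge\bar\varphi_1$, $d\varphi_i=-\bar v_i\,\varphi_1\wedge\bar\varphi_1+\sum_{j=2}^n\overline{A_{ij}}(\varphi_1+\bar\varphi_1)\wedge\varphi_j$ ($2\le i\le n$), $\lambda\in\mathbb R$, $v\in\mathbb C^{n-1}$, $A\in M_{n-1}(\mathbb C)$. The Chern connection is the unique connection preserving $J$ and $g$ whose torsion has vanishing $(1,1)$-part. *)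

theory Defs
  imports "HOL-Analysis.Analysis"
begin

definition lie_algebra :: "('a::euclidean_space \<Rightarrow> 'a \<Rightarrow> 'a) \<Rightarrow> bool" where
  "lie_algebra br \<longleftrightarrow> bilinear br \<and> (\<forall>x. br x x = 0) \<and>
     (\<forall>x y z. br x (br y z) + br y (br z x) + br z (br x y) = 0)"

definition almost_abelian :: "('a::euclidean_space \<Rightarrow> 'a \<Rightarrow> 'a) \<Rightarrow> bool" where
  "almost_abelian br \<longleftrightarrow> lie_algebra br \<and> (\<exists>x y. br x y \<noteq> 0) \<and>
     (\<exists>h. subspace h \<and> dim h = DIM('a) - 1 \<and>
          (\<forall>x y. y \<in> h \<longrightarrow> br x y \<in> h) \<and>
          (\<forall>y z. y \<in> h \<longrightarrow> z \<in> h \<longrightarrow> br y z = 0))"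

text \<open>Hermitian structure (J,g): J integrable complex structure, g a J-invariant inner product.\<close>
definition hermitian_structure ::
  "('a::euclidean_space \<Rightarrow> 'a \<Rightarrow> 'a) \<Rightarrow> ('a \<Rightarrow> 'a) \<Rightarrow> ('a \<Rightarrow> 'a \<Rightarrow> real) \<Rightarrow> bool" where
  "hermitian_structure br J g \<longleftrightarrow>
     linear J \<and> (\<forall>x. J (J x) = - x) \<and>
     (\<forall>x y. br (J x) (J y) - J (br (J x) y) - J (br x (J y)) - br x y = 0) \<and>
     bilinear g \<and> (\<forall>x y. g x y = g y x) \<and> (\<forall>x. x \<noteq> 0 \<longrightarrow> g x x > 0) \<and>
     (\<forall>x y. g (J x) (J y) = g x y)"

text \<open>Complexification: the pair (u,w) stands for u + sqrt(-1) w.\<close>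
definition cconj :: "'a::real_vector \<times> 'a \<Rightarrow> 'a \<times> 'a" where
  "cconj X = (fst X, - snd X)"

definition gC :: "('a \<Rightarrow> 'a \<Rightarrow> real) \<Rightarrow> 'a \<times> 'a \<Rightarrow> 'a \<times> 'a \<Rightarrow> complex" where
  "gC g X Y = Complex (g (fst X) (fst Y) - g (snd X) (snd Y))
                      (g (fst X) (snd Y) + g (snd X) (fst Y))"

definition g10 :: "('a::real_vector \<Rightarrow> 'a) \<Rightarrow> ('a \<times> 'a) set" where
  "g10 J = {(x, - J x) | x. True}"

text \<open>Complex 1-forms on g^C, given by their restriction to g (a real-linear map to complex);
  cext gives the complex-linear extension.\<close>
definition cext :: "('a \<Rightarrow> complex) \<Rightarrow> 'a \<times> 'a \<Rightarrow> complex" where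
  "cext \<alpha> X = \<alpha> (fst X) + \<i> * \<alpha> (snd X)"

definition cnjf :: "('a \<Rightarrow> complex) \<Rightarrow> 'a \<Rightarrow> complex" where
  "cnjf \<alpha> = (\<lambda>x. cnj (\<alpha> x))"

definition wedge :: "('a \<Rightarrow> complex) \<Rightarrow> ('a \<Rightarrow> complex) \<Rightarrow> 'a \<Rightarrow> 'a \<Rightarrow> complex" where
  "wedge \<alpha> \<beta> x y = \<alpha> x * \<beta> y - \<alpha> y * \<beta> x"

definition dCE :: "('a \<Rightarrow> 'a \<Rightarrow> 'a) \<Rightarrow> ('a \<Rightarrow> complex) \<Rightarrow> 'a \<Rightarrow> 'a \<Rightarrow> complex" where
  "dCE br \<alpha> x y = - \<alpha> (br x y)"

definition unitary_frame_coframe ::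
  "('a::euclidean_space \<Rightarrow> 'a) \<Rightarrow> ('a \<Rightarrow> 'a \<Rightarrow> real) \<Rightarrow> nat \<Rightarrow> (nat \<Rightarrow> 'a \<times> 'a)
     \<Rightarrow> (nat \<Rightarrow> 'a \<Rightarrow> complex) \<Rightarrow> bool" where
  "unitary_frame_coframe J g n e \<phi> \<longleftrightarrow>
     (\<forall>i\<in>{1..n}. e i \<in> g10 J) \<and>
     (\<forall>i\<in>{1..n}. \<forall>j\<in>{1..n}. gC g (e i) (cconj (e j)) = (if i = j then 1 else 0)) \<and>
     (\<forall>i\<in>{1..n}. linear (\<phi> i)) \<and>
     (\<forall>i\<in>{1..n}. \<forall>j\<in>{1..n}. cext (\<phi> i) (e j) = (if i = j then 1 else 0)
                              \<and> cext (\<phi> i) (cconj (e j)) = 0)"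

text \<open>Admissible frame with data lambda, v = (v_2..v_n), A = (A_ij)_{2<=i,j<=n}.
  Equalities of complex 2-forms are tested on real arguments (equivalent by complex bilinearity).\<close>
definition admissible_frame ::
  "('a::euclidean_space \<Rightarrow> 'a \<Rightarrow> 'a) \<Rightarrow> ('a \<Rightarrow> 'a) \<Rightarrow> ('a \<Rightarrow> 'a \<Rightarrow> real) \<Rightarrow> nat
     \<Rightarrow> (nat \<Rightarrow> 'a \<times> 'a) \<Rightarrow> (nat \<Rightarrow> 'a \<Rightarrow> complex)
     \<Rightarrow> real \<Rightarrow> (nat \<Rightarrow> complex) \<Rightarrow> (nat \<Rightarrow> nat \<Rightarrow> complex) \<Rightarrow> bool" where
  "admissible_frame br J g n e \<phi> lam v A \<longleftrightarrow>
     unitary_frame_coframe J g n e \<phi> \<and>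
     (\<forall>x y. dCE br (\<phi> 1) x y = - complex_of_real lam * wedge (\<phi> 1) (cnjf (\<phi> 1)) x y) \<and>
     (\<forall>i\<in>{2..n}. \<forall>x y. dCE br (\<phi> i) x y =
         - cnj (v i) * wedge (\<phi> 1) (cnjf (\<phi> 1)) x y
         + (\<Sum>j=2..n. cnj (A i j) * wedge (\<lambda>z. \<phi> 1 z + cnjf (\<phi> 1) z) (\<phi> j) x y))"

text \<open>Left-invariant connections = bilinear maps nab x y = nabla_x y on g.\<close>
definition torsion :: "('a \<Rightarrow> 'a \<Rightarrow> 'a) \<Rightarrow> ('a \<Rightarrow> 'a \<Rightarrow> 'a) \<Rightarrow> 'a \<Rightarrow> 'a \<Rightarrow> 'a::real_vector" where
  "torsion br nab x y = nab x y - nab y x - br x y"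

definition is_chern_connection ::
  "('a::euclidean_space \<Rightarrow> 'a \<Rightarrow> 'a) \<Rightarrow> ('a \<Rightarrow> 'a) \<Rightarrow> ('a \<Rightarrow> 'a \<Rightarrow> real)
     \<Rightarrow> ('a \<Rightarrow> 'a \<Rightarrow> 'a) \<Rightarrow> bool" where
  "is_chern_connection br J g nab \<longleftrightarrow> bilinear nab \<and>
     (\<forall>x y. nab x (J y) = J (nab x y)) \<and>
     (\<forall>x y z. g (nab x y) z + g y (nab x z) = 0) \<and>
     (\<forall>x y. torsion br nab x y + torsion br nab (J x) (J y) = 0)"

definition chern_connection ::
  "('a::euclidean_space \<Rightarrow> 'a \<Rightarrow> 'a) \<Rightarrow> ('a \<Rightarrow> 'a) \<Rightarrow> ('a \<Rightarrow> 'a \<Rightarrow> real) \<Rightarrow> ('a \<Rightarrow> 'a \<Rightarrow> 'a)" where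
  "chern_connection br J g = (THE nab. is_chern_connection br J g nab)"

definition flat :: "('a::real_vector \<Rightarrow> 'a \<Rightarrow> 'a) \<Rightarrow> ('a \<Rightarrow> 'a \<Rightarrow> 'a) \<Rightarrow> bool" where
  "flat br nab \<longleftrightarrow> (\<forall>x y z. nab x (nab y z) - nab y (nab x z) - nab (br x y) z = 0)"

end

theory Submission
  imports Defs
begin



locale AF =
  fixes br :: "'a::euclidean_space \<Rightarrow> 'a \<Rightarrow> 'a" and J :: "'a \<Rightarrow> 'a"
    and g :: "'a \<Rightarrow> 'a \<Rightarrow> real" and n :: nat
    and e :: "nat \<Rightarrow> 'a \<times> 'a" and \<phi> :: "nat \<Rightarrow> 'a \<Rightarrow> complex"
    and lam :: real and v :: "nat \<Rightarrow> complex" and A :: "nat \<Rightarrow> nat \<Rightarrow> complex"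
  assumes herm: "hermitian_structure br J g" and dimA: "DIM('a) = 2*n"
    and adm: "admissible_frame br J g n e \<phi> lam v A"
begin

lemma Jlin: "linear J" using herm by (simp add: hermitian_structure_def)
lemma JJ[simp]: "J (J x) = - x" using herm by (simp add: hermitian_structure_def)
lemma gbil: "bilinear g" using herm by (simp add: hermitian_structure_def)
lemma gsym: "g x y = g y x" using herm by (simp add: hermitian_structure_def)
lemma gpos: "x \<noteq> 0 \<Longrightarrow> g x x > 0" using herm by (simp add: hermitian_structure_def)
lemma gJ[simp]: "g (J x) (J y) = g x y" using herm by (simp add: hermitian_structure_def)

lemma J_neg[simp]: "J (- x) = - J x" using Jlin by (rule linear_neg)
lemma J_add: "J (x + y) = J x + J y" using Jlin by (rule linear_add)
lemma J_diff: "J (x - y) = J x - J y" using Jlin by (rule linear_diff)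
lemma J_zero[simp]: "J 0 = 0" using Jlin by (rule linear_0)
lemma J_scale: "J (c *\<^sub>R x) = c *\<^sub>R J x" using Jlin by (rule linear_cmul)

lemma g_lneg[simp]: "g (- x) y = - g x y" using gbil by (rule bilinear_lneg)
lemma g_rneg[simp]: "g x (- y) = - g x y" using gbil by (rule bilinear_rneg)
lemma g_ladd: "g (x + y) z = g x z + g y z" using gbil by (rule bilinear_ladd)
lemma g_radd: "g z (x + y) = g z x + g z y" using gbil by (rule bilinear_radd)
lemma g_lsub: "g (x - y) z = g x z - g y z" using gbil by (rule bilinear_lsub)
lemma g_rsub: "g z (x - y) = g z x - g z y" using gbil by (rule bilinear_rsub)
lemma g_lmul: "g (c *\<^sub>R x) y = c * g x y" using gbil by (simp add: bilinear_lmul)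
lemma g_rmul: "g x (c *\<^sub>R y) = c * g x y" using gbil by (simp add: bilinear_rmul)
lemma g_l0[simp]: "g 0 y = 0" using gbil by (rule bilinear_lzero)
lemma g_r0[simp]: "g x 0 = 0" using gbil by (rule bilinear_rzero)

lemma g_Jswap: "g x (J y) = - g (J x) y"
proof -
  have "g x (J y) = g (J x) (J (J y))" by (rule gJ[symmetric])
  thus ?thesis by simp
qed

definition p where "p k = fst (e k)"
definition q where "q k = J (p k)"

lemma uf: "unitary_frame_coframe J g n e \<phi>"
  using adm by (simp add: admissible_frame_def)

lemma e_eq: "k \<in> {1..n} \<Longrightarrow> e k = (p k, - J (p k))"
  using uf unfolding unitary_frame_coframe_def g10_def p_def by force

lemma phi_lin: "k \<in> {1..n} \<Longrightarrow> linear (\<phi> k)"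
  using uf unfolding unitary_frame_coframe_def by blast

lemma phi_pq: assumes k: "k \<in> {1..n}" and l: "l \<in> {1..n}"
  shows "\<phi> k (p l) = (if k = l then 1/2 else 0) \<and> \<phi> k (q l) = (if k = l then \<i>/2 else 0)"
proof -
  have h: "cext (\<phi> k) (e l) = (if k = l then 1 else 0)" "cext (\<phi> k) (cconj (e l)) = 0"
    using uf k l unfolding unitary_frame_coframe_def by auto
  have n: "\<phi> k (- q l) = - \<phi> k (q l)" using phi_lin[OF k] by (rule linear_neg)
  have h1: "\<phi> k (p l) - \<i> * \<phi> k (q l) = (if k = l then 1 else 0)"
    using h(1) e_eq[OF l] n by (simp add: cext_def q_def)
  have h2: "\<phi> k (p l) + \<i> * \<phi> k (q l) = 0"
    using h(2) e_eq[OF l] by (simp add: cext_def q_def cconj_def)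
  show ?thesis using h1 h2
    by (auto simp: complex_eq_iff split: if_splits)
qed

lemma phi_p: "k \<in> {1..n} \<Longrightarrow> l \<in> {1..n} \<Longrightarrow> \<phi> k (p l) = (if k = l then 1/2 else 0)"
  using phi_pq by blast
lemma phi_q: "k \<in> {1..n} \<Longrightarrow> l \<in> {1..n} \<Longrightarrow> \<phi> k (q l) = (if k = l then \<i>/2 else 0)"
  using phi_pq by blast

lemma g_pp_pq: assumes k: "k \<in> {1..n}" and l: "l \<in> {1..n}"
  shows "g (p k) (p l) = (if k = l then 1/2 else 0) \<and> g (p k) (q l) = 0"
proof -
  have h: "gC g (e k) (cconj (e l)) = (if k = l then 1 else 0)"
    using uf k l unfolding unitary_frame_coframe_def by auto
  have "g (q k) (p l) = g (p l) (J (p k))" by (simp add: q_def gsym)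
  also have "\<dots> = - g (J (p l)) (p k)" by (rule g_Jswap)
  also have "\<dots> = - g (p k) (q l)" by (simp add: q_def gsym)
  finally have qq: "g (q k) (p l) = - g (p k) (q l)" .
  have qqq: "g (q k) (q l) = g (p k) (p l)" by (simp add: q_def)
  have "gC g (e k) (cconj (e l)) = Complex (2 * g (p k) (p l)) (2 * g (p k) (q l))"
    using e_eq[OF k] e_eq[OF l] qq qqq by (simp add: gC_def cconj_def q_def[symmetric])
  with h show ?thesis by (auto simp: complex_eq_iff split: if_splits)
qed

lemma g_pp: "k \<in> {1..n} \<Longrightarrow> l \<in> {1..n} \<Longrightarrow> g (p k) (p l) = (if k = l then 1/2 else 0)"
  using g_pp_pq by blast
lemma g_pq: "k \<in> {1..n} \<Longrightarrow> l \<in> {1..n} \<Longrightarrow> g (p k) (q l) = 0"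
  using g_pp_pq by blast
lemma g_qp: "k \<in> {1..n} \<Longrightarrow> l \<in> {1..n} \<Longrightarrow> g (q k) (p l) = 0"
  using g_pq by (simp add: gsym)
lemma g_qq: "k \<in> {1..n} \<Longrightarrow> l \<in> {1..n} \<Longrightarrow> g (q k) (q l) = (if k = l then 1/2 else 0)"
  using g_pp by (simp add: q_def)

end



context AF begin

lemma phi_add: "k \<in> {1..n} \<Longrightarrow> \<phi> k (x + y) = \<phi> k x + \<phi> k y"
  using phi_lin by (simp add: linear_add)
lemma phi_diff: "k \<in> {1..n} \<Longrightarrow> \<phi> k (x - y) = \<phi> k x - \<phi> k y"
  using phi_lin by (simp add: linear_diff)
lemma phi_neg: "k \<in> {1..n} \<Longrightarrow> \<phi> k (- x) = - \<phi> k x"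
  using phi_lin by (simp add: linear_neg)
lemma phi_scale: "k \<in> {1..n} \<Longrightarrow> \<phi> k (c *\<^sub>R x) = of_real c * \<phi> k x"
  using phi_lin by (simp add: linear_cmul scaleR_conv_of_real)
lemma phi_zero: "k \<in> {1..n} \<Longrightarrow> \<phi> k 0 = 0"
  using phi_lin by (simp add: linear_0)
lemma phi_sum: "k \<in> {1..n} \<Longrightarrow> \<phi> k (sum f S) = (\<Sum>a\<in>S. \<phi> k (f a))"
  using phi_lin by (simp add: linear_sum)

definition vec :: "(nat \<Rightarrow> complex) \<Rightarrow> 'a" where
  "vec \<zeta> = (\<Sum>l\<in>{1..n}. (2 * Re (\<zeta> l)) *\<^sub>R p l + (2 * Im (\<zeta> l)) *\<^sub>R q l)"

lemma phi_vec: assumes k: "k \<in> {1..n}" shows "\<phi> k (vec \<zeta>) = \<zeta> k"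
proof -
  have "\<phi> k (vec \<zeta>) = (\<Sum>l\<in>{1..n}. of_real (2 * Re (\<zeta> l)) * \<phi> k (p l) + of_real (2 * Im (\<zeta> l)) * \<phi> k (q l))"
    using k by (simp add: vec_def phi_sum phi_add phi_scale)
  also have "\<dots> = (\<Sum>l\<in>{1..n}. if l = k then \<zeta> k else 0)"
  proof (rule sum.cong)
    fix l assume l: "l \<in> {1..n}"
    show "of_real (2 * Re (\<zeta> l)) * \<phi> k (p l) + of_real (2 * Im (\<zeta> l)) * \<phi> k (q l) = (if l = k then \<zeta> k else 0)"
      using phi_p[OF k l] phi_q[OF k l] by (auto simp: complex_eq_iff)
  qed simp
  also have "\<dots> = \<zeta> k" using k by simp
  finally show ?thesis .
qed

lemma phi_p': "Suc 0 \<le> k \<Longrightarrow> k \<le> n \<Longrightarrow> Suc 0 \<le> l \<Longrightarrow> l \<le> n \<Longrightarrow> \<phi> k (p l) = (if k = l then 1/2 else 0)"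
  using phi_p by simp
lemma phi_q': "Suc 0 \<le> k \<Longrightarrow> k \<le> n \<Longrightarrow> Suc 0 \<le> l \<Longrightarrow> l \<le> n \<Longrightarrow> \<phi> k (q l) = (if k = l then \<i>/2 else 0)"
  using phi_q by simp

lemma pq_ne: "k \<in> {1..n} \<Longrightarrow> p k \<noteq> q k"
  using phi_p[of k k] phi_q[of k k] by (auto simp: complex_eq_iff)

definition B where "B = p ` {1..n} \<union> q ` {1..n}"

lemma finB: "finite B" by (simp add: B_def)

lemma phi_B: assumes k: "k \<in> {1..n}" and b: "b \<in> B"
  shows "\<phi> k b = (if b = p k then 1/2 else 0) + (if b = q k then \<i>/2 else 0)"
  using b pq_ne[OF k] k unfolding B_def
  by (auto simp: phi_p phi_q)

lemma phi_comb: assumes k: "k \<in> {1..n}"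
  shows "\<phi> k (\<Sum>b\<in>B. c b *\<^sub>R b) = of_real (c (p k)) / 2 + \<i> * of_real (c (q k)) / 2"
proof -
  have "\<phi> k (\<Sum>b\<in>B. c b *\<^sub>R b) = (\<Sum>b\<in>B. (if b = p k then of_real (c b) / 2 else 0) + (if b = q k then \<i> * of_real (c b) / 2 else 0))"
    using k pq_ne[OF k] by (auto simp: phi_sum phi_scale phi_B intro!: sum.cong)
  also have "\<dots> = of_real (c (p k)) / 2 + \<i> * of_real (c (q k)) / 2"
    using k finB by (simp add: sum.distrib B_def)
  finally show ?thesis .
qed

lemma indepB: "independent B"
proof
  assume "dependent B"
  then obtain u where u: "\<exists>v\<in>B. u v \<noteq> 0" "(\<Sum>v\<in>B. u v *\<^sub>R v) = 0"
    using real_vector.dependent_finite[OF finB] by blast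
  have z: "u (p k) = 0 \<and> u (q k) = 0" if k: "k \<in> {1..n}" for k
    using phi_comb[OF k, of u] u(2) phi_zero[OF k] by (simp add: complex_eq_iff)
  from u(1) show False using z unfolding B_def by auto
qed

lemma cardB: "card B = 2 * n"
proof -
  have ip: "inj_on p {1..n}"
    by (rule inj_onI) (metis phi_p one_neq_zero divide_eq_0_iff zero_neq_numeral)
  have iq: "inj_on q {1..n}"
    by (rule inj_onI) (metis phi_q complex_i_not_zero divide_eq_0_iff zero_neq_numeral)
  have d: "p ` {1..n} \<inter> q ` {1..n} = {}"
  proof (rule ccontr)
    assume "p ` {1..n} \<inter> q ` {1..n} \<noteq> {}"
    then obtain k l where k: "k \<in> {1..n}" and l: "l \<in> {1..n}" and e: "p k = q l" by blast
    have "\<phi> k (p k) = \<phi> k (q l)" using e by simp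
    thus False using phi_p[OF k k] phi_q[OF k l] by (auto simp: complex_eq_iff split: if_splits)
  qed
  show ?thesis unfolding B_def
    using card_Un_disjoint[OF _ _ d] card_image[OF ip] card_image[OF iq] by simp
qed

lemma spanB: "span B = UNIV"
proof -
  have "(UNIV::'a set) \<subseteq> span B"
    by (rule card_ge_dim_independent) (auto simp: indepB cardB dimA)
  thus ?thesis by auto
qed

lemma coord_zero: assumes h: "\<And>k. k \<in> {1..n} \<Longrightarrow> \<phi> k r = 0" shows "r = 0"
proof -
  have "r \<in> span B" using spanB by auto
  then obtain c where c: "r = (\<Sum>b\<in>B. c b *\<^sub>R b)"
    using real_vector.span_finite[OF finB] by auto
  have z: "c (p k) = 0 \<and> c (q k) = 0" if k: "k \<in> {1..n}" for k
    using phi_comb[OF k, of c] h[OF k] c by (simp add: complex_eq_iff)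
  have "\<forall>b\<in>B. c b = 0" using z unfolding B_def by auto
  thus ?thesis using c by simp
qed

lemma coord_eq: assumes h: "\<And>k. k \<in> {1..n} \<Longrightarrow> \<phi> k x = \<phi> k y" shows "x = y"
proof -
  have "x - y = 0" by (rule coord_zero) (simp add: phi_diff h)
  thus ?thesis by simp
qed

lemma decomp: "vec (\<lambda>k. \<phi> k x) = x"
  by (rule coord_eq) (simp add: phi_vec)

lemma lin_zero:
  fixes f :: "'a \<Rightarrow> 'b::real_vector"
  assumes f: "linear f" and hp: "\<And>k. k \<in> {1..n} \<Longrightarrow> f (p k) = 0"
    and hq: "\<And>k. k \<in> {1..n} \<Longrightarrow> f (q k) = 0"
  shows "f x = 0"
proof -
  have "f x = f (vec (\<lambda>k. \<phi> k x))" by (simp add: decomp)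
  also have "\<dots> = 0"
    unfolding vec_def using hp hq
    by (simp add: linear_sum[OF f] linear_add[OF f] linear_cmul[OF f])
  finally show ?thesis .
qed

lemma phi_J: assumes k: "k \<in> {1..n}" shows "\<phi> k (J x) = \<i> * \<phi> k x"
proof -
  have L: "linear (\<lambda>x. \<phi> k (J x) - \<i> * \<phi> k x)"
      by (rule linearI) (simp_all add: J_add J_scale phi_add[OF k] phi_scale[OF k] algebra_simps scaleR_conv_of_real)
  have "(\<lambda>x. \<phi> k (J x) - \<i> * \<phi> k x) x = 0"
  proof (rule lin_zero[OF L])
    fix l assume l: "l \<in> {1..n}"
    show "\<phi> k (J (p l)) - \<i> * \<phi> k (p l) = 0"
      using k l by (simp add: q_def[symmetric] phi_p phi_q)
    show "\<phi> k (J (q l)) - \<i> * \<phi> k (q l) = 0"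
      using k l by (simp add: q_def phi_neg) (simp add: q_def[symmetric] phi_p phi_q)
  qed
  thus ?thesis by simp
qed

lemma g_p_any: assumes l: "l \<in> {1..n}" shows "g (p l) y = Re (\<phi> l y)"
proof -
  have L: "linear (\<lambda>y. g (p l) y - Re (\<phi> l y))"
      by (rule linearI) (simp_all add: g_radd g_rmul phi_add[OF l] phi_scale[OF l] algebra_simps)
  have "(\<lambda>y. g (p l) y - Re (\<phi> l y)) y = 0"
  proof (rule lin_zero[OF L])
  qed (use l in \<open>simp_all add: g_pp g_pq phi_p phi_q\<close>)
  thus ?thesis by simp
qed

lemma g_q_any: assumes l: "l \<in> {1..n}" shows "g (q l) y = Im (\<phi> l y)"
proof -
  have L: "linear (\<lambda>y. g (q l) y - Im (\<phi> l y))"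
      by (rule linearI) (simp_all add: g_radd g_rmul phi_add[OF l] phi_scale[OF l] algebra_simps)
  have "(\<lambda>y. g (q l) y - Im (\<phi> l y)) y = 0"
  proof (rule lin_zero[OF L])
  qed (use l in \<open>simp_all add: g_qq g_qp phi_p phi_q\<close>)
  thus ?thesis by simp
qed

lemma g_formula: "g x y = 2 * Re (\<Sum>k\<in>{1..n}. \<phi> k x * cnj (\<phi> k y))"
proof -
  have L: "linear (\<lambda>x. g x y - 2 * Re (\<Sum>k\<in>{1..n}. \<phi> k x * cnj (\<phi> k y)))"
      by (rule linearI) (simp_all add: g_ladd g_lmul phi_add phi_scale algebra_simps
          sum.distrib sum_distrib_left)
  have "(\<lambda>x. g x y - 2 * Re (\<Sum>k\<in>{1..n}. \<phi> k x * cnj (\<phi> k y))) x = 0"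
  proof (rule lin_zero[OF L])
    fix l assume l: "l \<in> {1..n}"
    have "(\<Sum>k\<in>{1..n}. \<phi> k (p l) * cnj (\<phi> k y)) = (\<Sum>k\<in>{1..n}. if k = l then cnj (\<phi> l y) / 2 else 0)"
      by (rule sum.cong) (use l in \<open>auto simp: phi_p'\<close>)
    also have "\<dots> = cnj (\<phi> l y) / 2" using l by simp
    finally have F: "(\<Sum>k\<in>{1..n}. \<phi> k (p l) * cnj (\<phi> k y)) = cnj (\<phi> l y) / 2" .
    show "g (p l) y - 2 * Re (\<Sum>k\<in>{1..n}. \<phi> k (p l) * cnj (\<phi> k y)) = 0"
      by (simp only: F) (simp add: g_p_any[OF l])
    have "(\<Sum>k\<in>{1..n}. \<phi> k (q l) * cnj (\<phi> k y)) = (\<Sum>k\<in>{1..n}. if k = l then \<i> * cnj (\<phi> l y) / 2 else 0)"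
      by (rule sum.cong) (use l in \<open>auto simp: phi_q'\<close>)
    also have "\<dots> = \<i> * cnj (\<phi> l y) / 2" using l by simp
    finally have F: "(\<Sum>k\<in>{1..n}. \<phi> k (q l) * cnj (\<phi> k y)) = \<i> * cnj (\<phi> l y) / 2" .
    show "g (q l) y - 2 * Re (\<Sum>k\<in>{1..n}. \<phi> k (q l) * cnj (\<phi> k y)) = 0"
      by (simp only: F) (simp add: g_q_any[OF l])
  qed
  thus ?thesis by simp
qed

end



context AF begin

lemma chern_unique:
  assumes c1: "is_chern_connection br J g N1" and c2: "is_chern_connection br J g N2"
  shows "N1 = N2"
proof -
  define S where "S x y = N1 x y - N2 x y" for x y
  have b1: "bilinear N1" and b2: "bilinear N2" using c1 c2 by (auto simp: is_chern_connection_def)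
  have SJ2: "S x (J y) = J (S x y)" for x y
    using c1 c2 by (simp add: is_chern_connection_def S_def J_diff)
  have Sskew: "g (S x y) z = - g y (S x z)" for x y z
  proof -
    have "g (N1 x y) z + g y (N1 x z) = 0" "g (N2 x y) z + g y (N2 x z) = 0"
      using c1 c2 by (auto simp: is_chern_connection_def)
    thus ?thesis by (simp add: S_def g_lsub g_rsub)
  qed
  have Stor: "S x y - S y x + S (J x) (J y) - S (J y) (J x) = 0" for x y
  proof -
    have "torsion br N1 x y + torsion br N1 (J x) (J y) = 0"
         "torsion br N2 x y + torsion br N2 (J x) (J y) = 0"
      using c1 c2 by (auto simp: is_chern_connection_def)
    thus ?thesis by (simp add: torsion_def S_def algebra_simps)
  qed
  have Slneg: "S (- x) y = - S x y" for x y
    using bilinear_lneg[OF b1] bilinear_lneg[OF b2] by (simp add: S_def)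
  have Srneg: "S x (- y) = - S x y" for x y
    using bilinear_rneg[OF b1] bilinear_rneg[OF b2] by (simp add: S_def)
  define F where "F z w = S z w + S (J z) (J w)" for z w
  have Fsym: "F z w = F w z" for z w
    using Stor[of z w] by (simp add: F_def algebra_simps)
  have F1: "F z (J w) = J (F z w)" for z w
    by (simp add: F_def SJ2 J_add Srneg)
  have F2: "F (J w) z = - J (F w z)" for w z
    by (simp add: F_def SJ2 J_add Slneg)
  have F0: "F z w = 0" for z w
  proof -
    have "J (F z w) = F z (J w)" by (rule F1[symmetric])
    also have "\<dots> = F (J w) z" by (rule Fsym)
    also have "\<dots> = - J (F w z)" by (rule F2)
    also have "\<dots> = - J (F z w)" by (simp only: Fsym[of w z])
    finally have "J (F z w) = - J (F z w)" .
    hence "J (F z w) = 0" by (simp add: eq_neg_iff_add_eq_0 scaleR_2[symmetric])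
    hence "J (J (F z w)) = 0" by simp
    thus ?thesis by simp
  qed
  have SJ1: "S (J z) w = J (S z w)" for z w
  proof -
    have "S z w = - S (J z) (J w)" using F0[of z w] by (simp add: F_def eq_neg_iff_add_eq_0)
    hence "J (S z w) = - J (J (S (J z) w))" by (simp add: SJ2)
    thus ?thesis by simp
  qed
  have S0: "S z w = 0" for z w
  proof -
    let ?t = "S z w"
    have "g (J ?t) u = - g (J ?t) u" for u
    proof -
      have "g (J ?t) u = g (S (J z) w) u" by (simp add: SJ1)
      also have "\<dots> = - g w (J (S z u))" using Sskew[of "J z" w u] by (simp add: SJ1)
      also have "\<dots> = g (J w) (S z u)" by (simp add: g_Jswap)
      also have "\<dots> = - g (S z (J w)) u" by (simp add: Sskew)
      also have "\<dots> = - g (J ?t) u" by (simp add: SJ2)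
      finally show ?thesis .
    qed
    hence "g (J ?t) (J ?t) = - g (J ?t) (J ?t)" by blast
    hence "g (J ?t) (J ?t) = 0" by linarith
    hence "J ?t = 0" using gpos by force
    hence "J (J ?t) = 0" by simp
    thus ?thesis by simp
  qed
  show ?thesis using S0 by (auto simp: S_def fun_eq_iff)
qed

end



context AF begin

lemma one_in: "(1::nat) \<in> {1..n}"
proof -
  have "DIM('a) > 0" by (rule DIM_positive)
  thus ?thesis using dimA by simp
qed

lemma n_ge1: "1 \<le> n" using one_in by simp

definition Mx :: "nat \<Rightarrow> nat \<Rightarrow> complex" where
  "Mx k l = (if k = 1 then (if l = 1 then - complex_of_real lam else 0)
             else (if l = 1 then - cnj (v k) else - cnj (A k l)))"
definition Ms :: "nat \<Rightarrow> nat \<Rightarrow> complex" where "Ms k l = cnj (Mx l k)"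
definition Q :: "'a \<Rightarrow> nat \<Rightarrow> nat \<Rightarrow> complex" where
  "Q x k l = cnj (\<phi> 1 x) * Mx k l - \<phi> 1 x * Ms k l"
definition nabC :: "'a \<Rightarrow> 'a \<Rightarrow> 'a" where
  "nabC x y = vec (\<lambda>k. \<Sum>l\<in>{1..n}. Q x k l * \<phi> l y)"

lemma phi_nab: "k \<in> {1..n} \<Longrightarrow> \<phi> k (nabC x y) = (\<Sum>l\<in>{1..n}. Q x k l * \<phi> l y)"
  by (simp add: nabC_def phi_vec)

lemma Q_add: "Q (x + y) k l = Q x k l + Q y k l"
  unfolding Q_def using phi_add[OF one_in, of x y] by (simp add: algebra_simps)
lemma Q_scale: "Q (c *\<^sub>R x) k l = of_real c * Q x k l"
  unfolding Q_def using phi_scale[OF one_in, of c x] by (simp add: algebra_simps)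
lemma Q_skew: "cnj (Q x l k) = - Q x k l"
  by (simp add: Q_def Ms_def algebra_simps)

lemma nab_bil: "bilinear nabC"
  unfolding bilinear_def
proof (intro conjI allI)
  fix x show "linear (nabC x)"
  proof (rule linearI)
    fix y z show "nabC x (y + z) = nabC x y + nabC x z"
      by (rule coord_eq) (simp add: phi_nab phi_add algebra_simps sum.distrib)
    fix c show "nabC x (c *\<^sub>R y) = c *\<^sub>R nabC x y"
      by (rule coord_eq) (simp add: phi_nab phi_scale algebra_simps sum_distrib_left)
  qed
next
  fix y show "linear (\<lambda>x. nabC x y)"
  proof (rule linearI)
    fix x z show "nabC (x + z) y = nabC x y + nabC z y"
      by (rule coord_eq) (simp add: phi_nab phi_add Q_add algebra_simps sum.distrib)
    fix c show "nabC (c *\<^sub>R x) y = c *\<^sub>R nabC x y"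
      by (rule coord_eq) (simp add: phi_nab phi_scale Q_scale algebra_simps sum_distrib_left)
  qed
qed

lemma nab_J: "nabC x (J y) = J (nabC x y)"
  by (rule coord_eq) (simp add: phi_nab phi_J sum_distrib_left algebra_simps)

lemma nab_metric: "g (nabC x y) z + g y (nabC x z) = 0"
proof -
  let ?I = "{1..n}"
  define S1 where "S1 = (\<Sum>k\<in>?I. \<Sum>l\<in>?I. Q x k l * \<phi> l y * cnj (\<phi> k z))"
  have e1: "(\<Sum>k\<in>?I. \<phi> k (nabC x y) * cnj (\<phi> k z)) = S1"
    by (simp add: S1_def phi_nab sum_distrib_right)
  have "(\<Sum>k\<in>?I. \<phi> k y * cnj (\<phi> k (nabC x z))) = (\<Sum>k\<in>?I. \<Sum>l\<in>?I. \<phi> k y * cnj (Q x k l) * cnj (\<phi> l z))"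
    by (simp add: phi_nab sum_distrib_left mult.assoc)
  also have "\<dots> = (\<Sum>l\<in>?I. \<Sum>k\<in>?I. \<phi> k y * cnj (Q x k l) * cnj (\<phi> l z))"
    by (rule sum.swap)
  also have "\<dots> = - S1"
    by (simp add: S1_def Q_skew sum_negf[symmetric] algebra_simps)
  finally have e2: "(\<Sum>k\<in>?I. \<phi> k y * cnj (\<phi> k (nabC x z))) = - S1" .
  show ?thesis unfolding g_formula[of "nabC x y"] g_formula[of y] e1 e2 by simp
qed

end



context AF begin

definition W :: "'a \<Rightarrow> 'a \<Rightarrow> complex" where
  "W x y = \<phi> 1 x * cnj (\<phi> 1 y) - \<phi> 1 y * cnj (\<phi> 1 x)"

definition AS :: "nat \<Rightarrow> 'a \<Rightarrow> complex" where
  "AS k y = (\<Sum>j=2..n. cnj (A k j) * \<phi> j y)"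

lemma br1: "\<phi> 1 (br x y) = of_real lam * W x y"
proof -
  have "dCE br (\<phi> 1) x y = - complex_of_real lam * wedge (\<phi> 1) (cnjf (\<phi> 1)) x y"
    using adm by (simp add: admissible_frame_def)
  thus ?thesis by (simp add: dCE_def wedge_def cnjf_def W_def)
qed

lemma brk: assumes k: "k \<in> {2..n}"
  shows "\<phi> k (br x y) = cnj (v k) * W x y
           - ((\<phi> 1 x + cnj (\<phi> 1 x)) * AS k y - (\<phi> 1 y + cnj (\<phi> 1 y)) * AS k x)"
proof -
  have "dCE br (\<phi> k) x y = - cnj (v k) * wedge (\<phi> 1) (cnjf (\<phi> 1)) x y
         + (\<Sum>j=2..n. cnj (A k j) * wedge (\<lambda>z. \<phi> 1 z + cnjf (\<phi> 1) z) (\<phi> j) x y)"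
    using adm k by (simp add: admissible_frame_def)
  hence h1: "- \<phi> k (br x y) = - cnj (v k) * W x y
         + (\<Sum>j=2..n. cnj (A k j) * wedge (\<lambda>z. \<phi> 1 z + cnjf (\<phi> 1) z) (\<phi> j) x y)"
    by (simp only: dCE_def wedge_def cnjf_def W_def)
  have h2: "(\<Sum>j=2..n. cnj (A k j) * wedge (\<lambda>z. \<phi> 1 z + cnjf (\<phi> 1) z) (\<phi> j) x y)
      = (\<phi> 1 x + cnj (\<phi> 1 x)) * AS k y - (\<phi> 1 y + cnj (\<phi> 1 y)) * AS k x"
    by (simp add: wedge_def cnjf_def AS_def sum_distrib_left sum_subtractf algebra_simps)
  show ?thesis using h1 h2 by algebra
qed

lemma I_split: "{1..n} = insert 1 {2..n}" using n_ge1 by auto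

lemma Msum: assumes k: "k \<in> {1..n}"
  shows "(\<Sum>l\<in>{1..n}. Mx k l * \<phi> l y) =
     (if k = 1 then - of_real lam * \<phi> 1 y else - cnj (v k) * \<phi> 1 y - AS k y)"
proof -
  have "(\<Sum>l\<in>{1..n}. Mx k l * \<phi> l y) = Mx k 1 * \<phi> 1 y + (\<Sum>l\<in>{2..n}. Mx k l * \<phi> l y)"
    by (subst I_split) simp
  also have "(\<Sum>l\<in>{2..n}. Mx k l * \<phi> l y) = (if k = 1 then 0 else - AS k y)"
    by (auto simp: Mx_def AS_def sum_negf)
  finally show ?thesis by (simp add: Mx_def)
qed

lemma Msum1: "(\<Sum>l\<in>{1..n}. Mx 1 l * \<phi> l y) = - of_real lam * \<phi> 1 y"
  using Msum[OF one_in] by simp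
lemma Msumk: "k \<in> {2..n} \<Longrightarrow> (\<Sum>l\<in>{1..n}. Mx k l * \<phi> l y) = - cnj (v k) * \<phi> 1 y - AS k y"
  using Msum[of k] by auto

lemma AS_J: "AS k (J y) = \<i> * AS k y"
proof -
  have "AS k (J y) = (\<Sum>j=2..n. \<i> * (cnj (A k j) * \<phi> j y))"
    unfolding AS_def by (rule sum.cong) (auto simp: phi_J)
  thus ?thesis by (simp add: AS_def sum_distrib_left)
qed

lemma i2: "\<i> * \<i> = -1" by simp
lemma cnj_i_mult: "cnj (\<i> * z) = - \<i> * cnj z" by simp

lemma QQJ: "(\<Sum>l\<in>{1..n}. Q x k l * \<phi> l y) + (\<Sum>l\<in>{1..n}. Q (J x) k l * \<phi> l (J y))
   = 2 * cnj (\<phi> 1 x) * (\<Sum>l\<in>{1..n}. Mx k l * \<phi> l y)"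
proof -
  have "(\<Sum>l\<in>{1..n}. Q x k l * \<phi> l y) + (\<Sum>l\<in>{1..n}. Q (J x) k l * \<phi> l (J y))
     = (\<Sum>l\<in>{1..n}. Q x k l * \<phi> l y + Q (J x) k l * \<phi> l (J y))"
    by (simp add: sum.distrib)
  also have "\<dots> = (\<Sum>l\<in>{1..n}. 2 * cnj (\<phi> 1 x) * (Mx k l * \<phi> l y))"
  proof (rule sum.cong)
    fix l assume l: "l \<in> {1..n}"
    have a: "\<phi> 1 (J x) = \<i> * \<phi> 1 x" by (rule phi_J[OF one_in])
    have b: "\<phi> l (J y) = \<i> * \<phi> l y" by (rule phi_J[OF l])
    have c: "cnj (\<phi> 1 (J x)) = - \<i> * cnj (\<phi> 1 x)" using a by simp
    show "Q x k l * \<phi> l y + Q (J x) k l * \<phi> l (J y) = 2 * cnj (\<phi> 1 x) * (Mx k l * \<phi> l y)"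
      unfolding Q_def using a b c i2 by algebra
  qed simp
  also have "\<dots> = 2 * cnj (\<phi> 1 x) * (\<Sum>l\<in>{1..n}. Mx k l * \<phi> l y)"
    by (simp add: sum_distrib_left)
  finally show ?thesis .
qed

lemma nab_torsion: "torsion br nabC x y + torsion br nabC (J x) (J y) = 0"
proof (rule coord_zero)
  fix k assume k: "k \<in> {1..n}"
  let ?S = "\<lambda>x y. (\<Sum>l\<in>{1..n}. Q x k l * \<phi> l y)"
  have "\<phi> k (torsion br nabC x y + torsion br nabC (J x) (J y))
     = (?S x y + ?S (J x) (J y)) - (?S y x + ?S (J y) (J x)) - \<phi> k (br x y) - \<phi> k (br (J x) (J y))"
    using k by (simp add: torsion_def phi_add phi_diff phi_nab)
  also have "\<dots> = 2 * cnj (\<phi> 1 x) * (\<Sum>l\<in>{1..n}. Mx k l * \<phi> l y)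
       - 2 * cnj (\<phi> 1 y) * (\<Sum>l\<in>{1..n}. Mx k l * \<phi> l x) - \<phi> k (br x y) - \<phi> k (br (J x) (J y))"
    by (simp only: QQJ)
  also have "\<dots> = 0"
  proof -
    have a: "\<phi> 1 (J x) = \<i> * \<phi> 1 x" by (rule phi_J[OF one_in])
    have b: "\<phi> 1 (J y) = \<i> * \<phi> 1 y" by (rule phi_J[OF one_in])
    have ca: "cnj (\<phi> 1 (J x)) = - \<i> * cnj (\<phi> 1 x)" using a by simp
    have cb: "cnj (\<phi> 1 (J y)) = - \<i> * cnj (\<phi> 1 y)" using b by simp
    show ?thesis
    proof (cases "k = 1")
      case True
      show ?thesis unfolding True Msum1 br1 W_def using a b ca cb i2 by algebra
    next
      case False
      hence k2: "k \<in> {2..n}" using k by auto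
      show ?thesis unfolding Msumk[OF k2] brk[OF k2] W_def AS_J using a b ca cb i2 by algebra
    qed
  qed
  finally show "\<phi> k (torsion br nabC x y + torsion br nabC (J x) (J y)) = 0" .
qed

lemma nab_chern: "is_chern_connection br J g nabC"
  unfolding is_chern_connection_def
  using nab_bil nab_J nab_metric nab_torsion by blast

lemma chern_eq: "chern_connection br J g = nabC"
  unfolding chern_connection_def
proof (rule the_equality)
  show "is_chern_connection br J g nabC" by (rule nab_chern)
next
  fix N assume "is_chern_connection br J g N"
  thus "N = nabC" by (rule chern_unique[OF _ nab_chern])
qed

end



context AF begin

abbreviation "I \<equiv> {1..n}"

lemma sum_I: "(\<Sum>l\<in>I. f l) = f 1 + (\<Sum>l\<in>{2..n}. f l)"
  by (subst I_split) simp

lemma phi_curv: assumes k: "k \<in> I"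
  shows "\<phi> k (nabC x (nabC y z) - nabC y (nabC x z) - nabC (br x y) z) =
    (\<Sum>l\<in>I. Q x k l * (\<Sum>m\<in>I. Q y l m * \<phi> m z))
  - (\<Sum>l\<in>I. Q y k l * (\<Sum>m\<in>I. Q x l m * \<phi> m z))
  - (\<Sum>l\<in>I. Q (br x y) k l * \<phi> l z)"
  using k by (simp add: phi_diff phi_nab)

definition P11 where "P11 k m = (\<Sum>l\<in>I. Mx k l * Mx l m)"
definition P12 where "P12 k m = (\<Sum>l\<in>I. Mx k l * Ms l m)"
definition P21 where "P21 k m = (\<Sum>l\<in>I. Ms k l * Mx l m)"
definition P22 where "P22 k m = (\<Sum>l\<in>I. Ms k l * Ms l m)"

lemma QQ: "(\<Sum>l\<in>I. Q x k l * Q y l m) =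
   cnj (\<phi> 1 x) * cnj (\<phi> 1 y) * P11 k m - cnj (\<phi> 1 x) * \<phi> 1 y * P12 k m
   - \<phi> 1 x * cnj (\<phi> 1 y) * P21 k m + \<phi> 1 x * \<phi> 1 y * P22 k m"
  by (simp add: Q_def P11_def P12_def P21_def P22_def algebra_simps sum.distrib
      sum_subtractf sum_distrib_left)

lemma swap_sum: "(\<Sum>l\<in>I. Q x k l * (\<Sum>m\<in>I. Q y l m * z m)) = (\<Sum>m\<in>I. (\<Sum>l\<in>I. Q x k l * Q y l m) * z m)"
proof -
  have "(\<Sum>l\<in>I. Q x k l * (\<Sum>m\<in>I. Q y l m * z m)) = (\<Sum>l\<in>I. \<Sum>m\<in>I. Q x k l * Q y l m * z m)"
    by (simp add: sum_distrib_left mult.assoc)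
  also have "\<dots> = (\<Sum>m\<in>I. \<Sum>l\<in>I. Q x k l * Q y l m * z m)" by (rule sum.swap)
  also have "\<dots> = (\<Sum>m\<in>I. (\<Sum>l\<in>I. Q x k l * Q y l m) * z m)" by (simp add: sum_distrib_right)
  finally show ?thesis .
qed

lemma flat_coord: "flat br nabC \<longleftrightarrow> (\<forall>x y z. \<forall>k\<in>I.
    (\<Sum>l\<in>I. Q x k l * (\<Sum>m\<in>I. Q y l m * \<phi> m z))
  - (\<Sum>l\<in>I. Q y k l * (\<Sum>m\<in>I. Q x l m * \<phi> m z))
  - (\<Sum>l\<in>I. Q (br x y) k l * \<phi> l z) = 0)" (is "?L \<longleftrightarrow> ?R")
proof
  assume f: "flat br nabC"
  show ?R
  proof (intro allI ballI)
    fix x y z k assume k: "k \<in> I"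
    have "nabC x (nabC y z) - nabC y (nabC x z) - nabC (br x y) z = 0"
      using f by (simp add: flat_def)
    hence "\<phi> k (nabC x (nabC y z) - nabC y (nabC x z) - nabC (br x y) z) = 0"
      using phi_zero[OF k] by simp
    thus "(\<Sum>l\<in>I. Q x k l * (\<Sum>m\<in>I. Q y l m * \<phi> m z))
  - (\<Sum>l\<in>I. Q y k l * (\<Sum>m\<in>I. Q x l m * \<phi> m z))
  - (\<Sum>l\<in>I. Q (br x y) k l * \<phi> l z) = 0" using phi_curv[OF k] by simp
  qed
next
  assume h: "\<forall>x y z. \<forall>k\<in>I.
    (\<Sum>l\<in>I. Q x k l * (\<Sum>m\<in>I. Q y l m * \<phi> m z))
  - (\<Sum>l\<in>I. Q y k l * (\<Sum>m\<in>I. Q x l m * \<phi> m z))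
  - (\<Sum>l\<in>I. Q (br x y) k l * \<phi> l z) = 0"
  show "flat br nabC" unfolding flat_def
  proof (intro allI)
    fix x y z
    show "nabC x (nabC y z) - nabC y (nabC x z) - nabC (br x y) z = 0"
      by (rule coord_zero) (use h phi_curv in auto)
  qed
qed

end



context AF begin

lemma Mx0: assumes lam0: "lam = 0" and v0: "\<forall>i\<in>{2..n}. v i = 0"
  and k: "k \<in> I" and l: "l \<in> I"
  shows "Mx k l = (if k = 1 \<or> l = 1 then 0 else - cnj (A k l))"
proof -
  have "k \<noteq> 1 \<Longrightarrow> v k = 0" using v0 k by auto
  thus ?thesis unfolding Mx_def using lam0 by auto
qed

lemma P_forms: assumes lam0: "lam = 0" and v0: "\<forall>i\<in>{2..n}. v i = 0"
  and k: "k \<in> {2..n}" and m: "m \<in> {2..n}"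
  shows "P12 k m = (\<Sum>l=2..n. cnj (A k l) * A m l) \<and> P21 k m = (\<Sum>l=2..n. A l k * cnj (A l m))"
proof -
  have kI: "k \<in> I" and mI: "m \<in> I" and k1: "k \<noteq> 1" and m1: "m \<noteq> 1" using k m by auto
  have "P12 k m = Mx k 1 * Ms 1 m + (\<Sum>l\<in>{2..n}. Mx k l * Ms l m)"
    unfolding P12_def by (rule sum_I)
  also have "\<dots> = (\<Sum>l=2..n. cnj (A k l) * A m l)"
  proof -
    have "Mx k 1 = 0" using Mx0[OF lam0 v0 kI one_in] by simp
    moreover have "(\<Sum>l\<in>{2..n}. Mx k l * Ms l m) = (\<Sum>l=2..n. cnj (A k l) * A m l)"
    proof (rule sum.cong)
      fix l assume l: "l \<in> {2..n}"
      hence lI: "l \<in> I" and l1: "l \<noteq> 1" by auto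
      show "Mx k l * Ms l m = cnj (A k l) * A m l"
        unfolding Ms_def using Mx0[OF lam0 v0 kI lI] Mx0[OF lam0 v0 mI lI] k1 l1 m1 by simp
    qed simp
    ultimately show ?thesis by simp
  qed
  finally have a: "P12 k m = (\<Sum>l=2..n. cnj (A k l) * A m l)" .
  have "P21 k m = Ms k 1 * Mx 1 m + (\<Sum>l\<in>{2..n}. Ms k l * Mx l m)"
    unfolding P21_def by (rule sum_I)
  also have "\<dots> = (\<Sum>l=2..n. A l k * cnj (A l m))"
  proof -
    have "Mx 1 m = 0" using Mx0[OF lam0 v0 one_in mI] by simp
    moreover have "(\<Sum>l\<in>{2..n}. Ms k l * Mx l m) = (\<Sum>l=2..n. A l k * cnj (A l m))"
    proof (rule sum.cong)
      fix l assume l: "l \<in> {2..n}"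
      hence lI: "l \<in> I" and l1: "l \<noteq> 1" by auto
      show "Ms k l * Mx l m = A l k * cnj (A l m)"
        unfolding Ms_def using Mx0[OF lam0 v0 lI kI] Mx0[OF lam0 v0 lI mI] k1 l1 m1 by simp
    qed simp
    ultimately show ?thesis by simp
  qed
  finally show ?thesis using a by simp
qed

lemma P_edge: assumes lam0: "lam = 0" and v0: "\<forall>i\<in>{2..n}. v i = 0"
  and k: "k \<in> I" and m: "m \<in> I" and e: "k = 1 \<or> m = 1"
  shows "P12 k m = 0 \<and> P21 k m = 0"
proof -
  have h1: "Mx k l * Ms l m = 0" if l: "l \<in> I" for l
    unfolding Ms_def using Mx0[OF lam0 v0 k l] Mx0[OF lam0 v0 m l] Mx0[OF lam0 v0 l l] e by auto
  have h2: "Ms k l * Mx l m = 0" if l: "l \<in> I" for l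
    unfolding Ms_def using Mx0[OF lam0 v0 l k] Mx0[OF lam0 v0 l m] e by auto
  have "P12 k m = 0" unfolding P12_def by (rule sum.neutral) (use h1 in blast)
  moreover have "P21 k m = 0" unfolding P21_def by (rule sum.neutral) (use h2 in blast)
  ultimately show ?thesis by simp
qed

lemma P12_P21: assumes lam0: "lam = 0" and v0: "\<forall>i\<in>{2..n}. v i = 0"
  and comm: "\<forall>i\<in>{2..n}. \<forall>j\<in>{2..n}.
              (\<Sum>k=2..n. A i k * cnj (A j k)) = (\<Sum>k=2..n. cnj (A k i) * A k j)"
  and k: "k \<in> I" and m: "m \<in> I"
  shows "P12 k m = P21 k m"
proof (cases "k = 1 \<or> m = 1")
  case True thus ?thesis using P_edge[OF lam0 v0 k m] by simp
next
  case False
  hence k2: "k \<in> {2..n}" and m2: "m \<in> {2..n}" using k m by auto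
  have "cnj (\<Sum>l=2..n. A k l * cnj (A m l)) = cnj (\<Sum>l=2..n. cnj (A l k) * A l m)"
    using comm k2 m2 by simp
  thus ?thesis using P_forms[OF lam0 v0 k2 m2] by (simp add: cnj_sum)
qed

lemma suff: assumes lam0: "lam = 0" and v0: "\<forall>i\<in>{2..n}. v i = 0"
  and comm: "\<forall>i\<in>{2..n}. \<forall>j\<in>{2..n}.
              (\<Sum>k=2..n. A i k * cnj (A j k)) = (\<Sum>k=2..n. cnj (A k i) * A k j)"
  shows "flat br nabC"
  unfolding flat_coord
proof (intro allI ballI)
  fix x y z k assume k: "k \<in> I"
  have qb: "Q (br x y) k l = 0" for l unfolding Q_def br1 using lam0 by simp
  have "(\<Sum>l\<in>I. Q x k l * (\<Sum>m\<in>I. Q y l m * \<phi> m z)) = (\<Sum>l\<in>I. Q y k l * (\<Sum>m\<in>I. Q x l m * \<phi> m z))"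
    unfolding swap_sum
  proof (rule sum.cong)
    fix m assume m: "m \<in> I"
    have "P12 k m = P21 k m" by (rule P12_P21[OF lam0 v0 comm k m])
    thus "(\<Sum>l\<in>I. Q x k l * Q y l m) * \<phi> m z = (\<Sum>l\<in>I. Q y k l * Q x l m) * \<phi> m z"
      unfolding QQ by (simp add: algebra_simps)
  qed simp
  thus "(\<Sum>l\<in>I. Q x k l * (\<Sum>m\<in>I. Q y l m * \<phi> m z))
  - (\<Sum>l\<in>I. Q y k l * (\<Sum>m\<in>I. Q x l m * \<phi> m z))
  - (\<Sum>l\<in>I. Q (br x y) k l * \<phi> l z) = 0" by (simp add: qb)
qed

end



context AF begin

lemma sum_pj: assumes j: "j \<in> I" shows "(\<Sum>m\<in>I. X m * \<phi> m (p j)) = X j / 2"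
proof -
  have "(\<Sum>m\<in>I. X m * \<phi> m (p j)) = (\<Sum>m\<in>I. if m = j then X j / 2 else 0)"
  proof (rule sum.cong)
    fix m assume m: "m \<in> I" show "X m * \<phi> m (p j) = (if m = j then X j / 2 else 0)"
      using phi_p[OF m j] by simp
  qed simp
  thus ?thesis using j by simp
qed

lemma sdiv: "(\<Sum>l\<in>S. ff l * (gg l / 2)) = (\<Sum>l\<in>S. ff l * gg l) / (2::complex)"
  by (simp add: sum_divide_distrib)

lemma nec_E: assumes f: "flat br nabC" and k: "k \<in> I" and j: "j \<in> I"
  shows "P12 k j - P21 k j + of_real lam * (Mx k j + Ms k j) = 0"
proof -
  let ?x = "p 1" and ?y = "q 1" and ?z = "p j"
  have h: "(\<Sum>l\<in>I. Q ?x k l * (\<Sum>m\<in>I. Q ?y l m * \<phi> m ?z))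
  - (\<Sum>l\<in>I. Q ?y k l * (\<Sum>m\<in>I. Q ?x l m * \<phi> m ?z))
  - (\<Sum>l\<in>I. Q (br ?x ?y) k l * \<phi> l ?z) = 0"
    using f k unfolding flat_coord by blast
  hence H: "(\<Sum>l\<in>I. Q ?x k l * Q ?y l j) / 2 - (\<Sum>l\<in>I. Q ?y k l * Q ?x l j) / 2
      - Q (br ?x ?y) k j / 2 = 0"
    unfolding sum_pj[OF j] sdiv .
  define a where "a = \<phi> 1 ?x"
  define b where "b = \<phi> 1 ?y"
  have a: "a = 1/2" unfolding a_def using phi_p[OF one_in one_in] by simp
  have b: "b = \<i>/2" unfolding b_def using phi_q[OF one_in one_in] by simp
  have ca: "cnj a = 1/2" unfolding a by simp
  have cb: "cnj b = - \<i>/2" unfolding b by simp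
  have qbr: "Q (br ?x ?y) k j = of_real lam * (cnj a * b - cnj b * a) * Mx k j
      - of_real lam * (a * cnj b - b * cnj a) * Ms k j"
    unfolding Q_def br1 W_def a_def b_def by simp
  have H2: "(cnj a * cnj b * P11 k j - cnj a * b * P12 k j - a * cnj b * P21 k j + a * b * P22 k j) / 2
     - (cnj b * cnj a * P11 k j - cnj b * a * P12 k j - b * cnj a * P21 k j + b * a * P22 k j) / 2
     - (of_real lam * (cnj a * b - cnj b * a) * Mx k j
      - of_real lam * (a * cnj b - b * cnj a) * Ms k j) / 2 = 0"
    using H unfolding QQ qbr a_def[symmetric] b_def[symmetric] .
  define X where "X = cnj a * cnj b * P11 k j - cnj a * b * P12 k j - a * cnj b * P21 k j + a * b * P22 k j"
  define Y where "Y = cnj b * cnj a * P11 k j - cnj b * a * P12 k j - b * cnj a * P21 k j + b * a * P22 k j"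
  define Z where "Z = of_real lam * (cnj a * b - cnj b * a) * Mx k j - of_real lam * (a * cnj b - b * cnj a) * Ms k j"
  have "X / 2 - Y / 2 - Z / 2 = 0" using H2 unfolding X_def Y_def Z_def .
  hence "(X - Y - Z) / 2 = 0" by (simp add: diff_divide_distrib)
  hence H4: "X - Y - Z = 0" by simp
  have a2: "2 * a = 1" and b2: "2 * b = \<i>" and ca2: "2 * cnj a = 1" and cb2: "2 * cnj b = - \<i>"
    unfolding a b by simp_all
  show ?thesis using H4 a2 b2 ca2 cb2 i2 unfolding X_def Y_def Z_def by algebra
qed

end



context AF begin

lemma nec: assumes f: "flat br nabC"
  shows "lam = 0 \<and> (\<forall>i\<in>{2..n}. v i = 0) \<and>
           (\<forall>i\<in>{2..n}. \<forall>j\<in>{2..n}.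
              (\<Sum>k=2..n. A i k * cnj (A j k)) = (\<Sum>k=2..n. cnj (A k i) * A k j))"
proof -
  have E: "P12 1 1 - P21 1 1 + of_real lam * (Mx 1 1 + Ms 1 1) = 0"
    by (rule nec_E[OF f one_in one_in])
  have p12: "P12 1 1 = of_real lam * of_real lam"
  proof -
    have "P12 1 1 = Mx 1 1 * Ms 1 1 + (\<Sum>l\<in>{2..n}. Mx 1 l * Ms l 1)"
      unfolding P12_def by (rule sum_I)
    also have "(\<Sum>l\<in>{2..n}. Mx 1 l * Ms l 1) = 0"
      by (rule sum.neutral) (auto simp: Mx_def)
    finally show ?thesis by (simp add: Mx_def Ms_def)
  qed
  define T where "T = (\<Sum>l\<in>{2..n}. (cmod (v l))\<^sup>2)"
  have p21: "P21 1 1 = of_real lam * of_real lam + of_real T"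
  proof -
    have "P21 1 1 = Ms 1 1 * Mx 1 1 + (\<Sum>l\<in>{2..n}. Ms 1 l * Mx l 1)"
      unfolding P21_def by (rule sum_I)
    also have "(\<Sum>l\<in>{2..n}. Ms 1 l * Mx l 1) = (\<Sum>l\<in>{2..n}. complex_of_real ((cmod (v l))\<^sup>2))"
    proof (rule sum.cong)
      fix l assume "l \<in> {2..n}"
      hence "Ms 1 l * Mx l 1 = v l * cnj (v l)" by (auto simp: Mx_def Ms_def)
      thus "Ms 1 l * Mx l 1 = complex_of_real ((cmod (v l))\<^sup>2)" by (simp only: complex_norm_square)
    qed simp
    also have "\<dots> = of_real T" by (simp add: T_def)
    finally show ?thesis by (simp add: Mx_def Ms_def)
  qed
  have mm: "Mx 1 1 + Ms 1 1 = - 2 * of_real lam" by (simp add: Mx_def Ms_def)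
  have "complex_of_real T + 2 * complex_of_real lam * complex_of_real lam = 0"
    using E unfolding p12 p21 mm by algebra
  hence "complex_of_real (T + 2 * lam * lam) = 0"
    by (simp only: of_real_add of_real_mult of_real_numeral)
  hence T0: "T + 2 * lam * lam = 0" by (simp only: of_real_eq_0_iff)
  have Tge: "T \<ge> 0" unfolding T_def by (simp add: sum_nonneg)
  have ll: "lam * lam \<ge> 0" by simp
  have lam0: "lam = 0" using T0 Tge ll by (simp add: add_nonneg_eq_0_iff)
  have "T = 0" using T0 lam0 by simp
  hence "\<forall>l\<in>{2..n}. (cmod (v l))\<^sup>2 = 0" unfolding T_def
    by (subst (asm) sum_nonneg_eq_0_iff) auto
  hence v0: "\<forall>i\<in>{2..n}. v i = 0" by simp
  have comm: "(\<Sum>k=2..n. A i k * cnj (A j k)) = (\<Sum>k=2..n. cnj (A k i) * A k j)"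
    if i: "i \<in> {2..n}" and j: "j \<in> {2..n}" for i j
  proof -
    have iI: "i \<in> I" and jI: "j \<in> I" using i j by auto
    have "P12 i j - P21 i j + of_real lam * (Mx i j + Ms i j) = 0" by (rule nec_E[OF f iI jI])
    hence "P12 i j = P21 i j" using lam0 by simp
    hence "(\<Sum>l=2..n. cnj (A i l) * A j l) = (\<Sum>l=2..n. A l i * cnj (A l j))"
      using P_forms[OF lam0 v0 i j] by simp
    hence "cnj (\<Sum>l=2..n. cnj (A i l) * A j l) = cnj (\<Sum>l=2..n. A l i * cnj (A l j))" by simp
    thus ?thesis by (simp add: cnj_sum)
  qed
  show ?thesis using lam0 v0 comm by blast
qed

end

theorem lemma6:
  fixes br :: "'a::euclidean_space \<Rightarrow> 'a \<Rightarrow> 'a"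
    and J :: "'a \<Rightarrow> 'a" and g :: "'a \<Rightarrow> 'a \<Rightarrow> real" and n :: nat
    and e :: "nat \<Rightarrow> 'a \<times> 'a" and \<phi> :: "nat \<Rightarrow> 'a \<Rightarrow> complex"
    and lam :: real and v :: "nat \<Rightarrow> complex" and A :: "nat \<Rightarrow> nat \<Rightarrow> complex"
  assumes "almost_abelian br"
    and "hermitian_structure br J g"
    and "DIM('a) = 2 * n"
    and "admissible_frame br J g n e \<phi> lam v A"
  shows "flat br (chern_connection br J g) \<longleftrightarrow>
           lam = 0 \<and> (\<forall>i\<in>{2..n}. v i = 0) \<and>
           (\<forall>i\<in>{2..n}. \<forall>j\<in>{2..n}.
              (\<Sum>k=2..n. A i k * cnj (A j k)) = (\<Sum>k=2..n. cnj (A k i) * A k j))"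
proof -
  interpret AF br J g n e \<phi> lam v A
    using assms(2-4) by unfold_locales
  show ?thesis
  proof
    assume "flat br (chern_connection br J g)"
    thus "lam = 0 \<and> (\<forall>i\<in>{2..n}. v i = 0) \<and>
           (\<forall>i\<in>{2..n}. \<forall>j\<in>{2..n}.
              (\<Sum>k=2..n. A i k * cnj (A j k)) = (\<Sum>k=2..n. cnj (A k i) * A k j))"
      unfolding chern_eq by (rule nec)
  next
    assume h: "lam = 0 \<and> (\<forall>i\<in>{2..n}. v i = 0) \<and>
           (\<forall>i\<in>{2..n}. \<forall>j\<in>{2..n}.
              (\<Sum>k=2..n. A i k * cnj (A j k)) = (\<Sum>k=2..n. cnj (A k i) * A k j))"
    show "flat br (chern_connection br J g)"
      unfolding chern_eq using h suff by blast
  qed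
qed



end
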